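(* Let $\mathcal{H}$ be a reproducing kernel Hilbert space of functions on a set $X$, with multiplier algebra $\mathcal{M}(\mathcal{H})$. Let $(\phi_n)_{n\ge1}$ be a sequence of elements of the closed unit ball of $\mathcal{M}(\mathcal{H})$. Put $\Phi_0=1$ and $\Phi_n:=\phi_1\phi_2\cdots\phi_n$ for $n\ge1$. Assume that $\lim_{n\to\infty}\Phi_n(x)=0$ for every $x\in X$. Then for every $f\in\mathcal{H}$, \[ f=\sum_{n=1}^{\infty}\Phi_{n-1}\cdot Q_{\phi_n}M_{\Phi_{n-1}}^{*}f, \] where the series converges in the norm of $\mathcal{H}$.
   Context: For a multiplier $\phi\in\mathcal{M}(\mathcal{H})$, $M_\phi:\mathcal{H}\to\mathcal{H}$ denotes the multiplication operator $M_\phi g=\phi g$, and $M_\phi^*$ its Hilbert space adjoint. The multiplier norm of $\phi$ is the operator norm of $M_\phi$; the closed unit ball of $\mathcal{M}(\mathcal{H})$ consists of the multipliers with $\|M_\phi\|\le 1$. For $\phi\in\mathcal{M}(\mathcal{H})$ define $P_\phi:=M_\phi M_\phi^*$ and $Q_\phi:=I-M_\phi M_\phi^*$, where $I$ is the identity on $\mathcal{H}$. The reproducing kernel of $\mathcal{H}$ at $x\in X$ is denoted $k_x$. *)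

theory Defs
  imports Complex_Main
begin

text \<open>A Hilbert space of complex-valued functions on the set X (modelled as the
  type 'x), given by its carrier H and inner product ip (linear in the first,
  conjugate-linear in the second argument).\<close>

definition hnorm :: "(('x \<Rightarrow> complex) \<Rightarrow> ('x \<Rightarrow> complex) \<Rightarrow> complex) \<Rightarrow> ('x \<Rightarrow> complex) \<Rightarrow> real" where
  "hnorm ip f = sqrt (Re (ip f f))"

definition rkhs :: "('x \<Rightarrow> complex) set \<Rightarrow> (('x \<Rightarrow> complex) \<Rightarrow> ('x \<Rightarrow> complex) \<Rightarrow> complex) \<Rightarrow> bool" where
  "rkhs H ip \<longleftrightarrow>
     (\<lambda>x. 0) \<in> H
   \<and> (\<forall>f\<in>H. \<forall>g\<in>H. (\<lambda>x. f x + g x) \<in> H)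
   \<and> (\<forall>c. \<forall>f\<in>H. (\<lambda>x. c * f x) \<in> H)
   \<and> (\<forall>f\<in>H. \<forall>g\<in>H. \<forall>h\<in>H. ip (\<lambda>x. f x + g x) h = ip f h + ip g h)
   \<and> (\<forall>c. \<forall>f\<in>H. \<forall>g\<in>H. ip (\<lambda>x. c * f x) g = c * ip f g)
   \<and> (\<forall>f\<in>H. \<forall>g\<in>H. ip g f = cnj (ip f g))
   \<and> (\<forall>f\<in>H. Im (ip f f) = 0 \<and> Re (ip f f) \<ge> 0)
   \<and> (\<forall>f\<in>H. ip f f = 0 \<longrightarrow> f = (\<lambda>x. 0))
   \<comment> \<open>completeness\<close>
   \<and> (\<forall>s::nat \<Rightarrow> ('x \<Rightarrow> complex). (\<forall>n. s n \<in> H) \<longrightarrow>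
        (\<forall>e>0. \<exists>N. \<forall>m\<ge>N. \<forall>n\<ge>N. hnorm ip (\<lambda>x. s m x - s n x) < e) \<longrightarrow>
        (\<exists>g\<in>H. (\<lambda>n. hnorm ip (\<lambda>x. s n x - g x)) \<longlonglongrightarrow> 0))
   \<comment> \<open>point evaluations are bounded (reproducing kernel property)\<close>
   \<and> (\<forall>x. \<exists>C. \<forall>f\<in>H. cmod (f x) \<le> C * hnorm ip f)"

definition multiplier :: "('x \<Rightarrow> complex) set \<Rightarrow> ('x \<Rightarrow> complex) \<Rightarrow> bool" where
  "multiplier H \<phi> \<longleftrightarrow> (\<forall>f\<in>H. (\<lambda>x. \<phi> x * f x) \<in> H)"

definition mult_ball :: "('x \<Rightarrow> complex) set \<Rightarrow> (('x \<Rightarrow> complex) \<Rightarrow> ('x \<Rightarrow> complex) \<Rightarrow> complex) \<Rightarrow> ('x \<Rightarrow> complex) \<Rightarrow> bool" where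
  "mult_ball H ip \<phi> \<longleftrightarrow> multiplier H \<phi> \<and>
     (\<forall>f\<in>H. hnorm ip (\<lambda>x. \<phi> x * f x) \<le> hnorm ip f)"

definition Mop :: "('x \<Rightarrow> complex) \<Rightarrow> ('x \<Rightarrow> complex) \<Rightarrow> ('x \<Rightarrow> complex)" where
  "Mop \<phi> f = (\<lambda>x. \<phi> x * f x)"

definition hadj :: "('x \<Rightarrow> complex) set \<Rightarrow> (('x \<Rightarrow> complex) \<Rightarrow> ('x \<Rightarrow> complex) \<Rightarrow> complex)
    \<Rightarrow> (('x \<Rightarrow> complex) \<Rightarrow> ('x \<Rightarrow> complex)) \<Rightarrow> ('x \<Rightarrow> complex) \<Rightarrow> ('x \<Rightarrow> complex)" where
  "hadj H ip T f = (THE g. g \<in> H \<and> (\<forall>h\<in>H. ip (T h) f = ip h g))"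

definition Qop :: "('x \<Rightarrow> complex) set \<Rightarrow> (('x \<Rightarrow> complex) \<Rightarrow> ('x \<Rightarrow> complex) \<Rightarrow> complex)
    \<Rightarrow> ('x \<Rightarrow> complex) \<Rightarrow> ('x \<Rightarrow> complex) \<Rightarrow> ('x \<Rightarrow> complex)" where
  "Qop H ip \<phi> f = (\<lambda>x. f x - Mop \<phi> (hadj H ip (Mop \<phi>) f) x)"

definition Phi :: "(nat \<Rightarrow> 'x \<Rightarrow> complex) \<Rightarrow> nat \<Rightarrow> 'x \<Rightarrow> complex" where
  "Phi \<phi> n = (\<lambda>x. \<Prod>k\<in>{1..n}. \<phi> k x)"

end

theory Submission
  imports Defs
begin

lemma half_sq: assumes "(u::real) = 1/2 * v" shows "v\<^sup>2 = 4 * u\<^sup>2"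
proof -
  have "v = 2 * u" using assms by simp
  then show ?thesis by (simp add: power2_eq_square)
qed

lemma A1: assumes "(d::real) > 0" shows "2 * (- 1 / d * q) + (- 1 / d)\<^sup>2 * q * (d - 1) = - q * (d + 1) / d\<^sup>2"
proof -
  have "2 * (- 1 / d * q) = (- 2 * q * d) / d\<^sup>2" using assms by (simp add: power2_eq_square)
  moreover have "(- 1 / d)\<^sup>2 * q * (d - 1) = q * (d - 1) / d\<^sup>2" by (simp add: power_divide)
  ultimately have "2 * (- 1 / d * q) + (- 1 / d)\<^sup>2 * q * (d - 1) = (- 2 * q * d + q * (d - 1)) / d\<^sup>2"
    by (simp add: add_divide_distrib diff_divide_distrib)
  also have "- 2 * q * d + q * (d - 1) = - q * (d + 1)" by (simp add: algebra_simps)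
  finally show ?thesis .
qed
lemma aux_q: assumes "(K::real) \<ge> 0"
  shows "2 * (- 1 / (K + 1) * q) + (- 1 / (K + 1))\<^sup>2 * q * K = - q * (K + 2) / (K + 1)\<^sup>2"
proof -
  have "K + 1 > 0" using assms by simp
  from A1[OF this, of q] show ?thesis by (simp add: add.commute add.left_commute)
qed

locale rk = fixes H :: "('x \<Rightarrow> complex) set" and ip
  assumes R: "rkhs H ip"
begin

lemma zero: "(\<lambda>x. 0) \<in> H" using R unfolding rkhs_def by blast
lemma add: "f \<in> H \<Longrightarrow> g \<in> H \<Longrightarrow> (\<lambda>x. f x + g x) \<in> H" using R unfolding rkhs_def by blast
lemma scale: "f \<in> H \<Longrightarrow> (\<lambda>x. c * f x) \<in> H" using R unfolding rkhs_def by blast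
lemma ip_add: "f \<in> H \<Longrightarrow> g \<in> H \<Longrightarrow> h \<in> H \<Longrightarrow> ip (\<lambda>x. f x + g x) h = ip f h + ip g h"
  using R unfolding rkhs_def by blast
lemma ip_scale: "f \<in> H \<Longrightarrow> g \<in> H \<Longrightarrow> ip (\<lambda>x. c * f x) g = c * ip f g"
  using R unfolding rkhs_def by blast
lemma ip_cnj: "f \<in> H \<Longrightarrow> g \<in> H \<Longrightarrow> ip g f = cnj (ip f g)"
  using R unfolding rkhs_def by blast
lemma ip_pos: "f \<in> H \<Longrightarrow> Im (ip f f) = 0 \<and> Re (ip f f) \<ge> 0"
  using R unfolding rkhs_def by blast
lemma ip_def0: "f \<in> H \<Longrightarrow> ip f f = 0 \<Longrightarrow> f = (\<lambda>x. 0)"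
  using R unfolding rkhs_def by blast
lemma complete: "(\<And>n. s n \<in> H) \<Longrightarrow> (\<And>e. e>0 \<Longrightarrow> \<exists>N. \<forall>m\<ge>N. \<forall>n\<ge>N. hnorm ip (\<lambda>x. s m x - s n x) < e) \<Longrightarrow>
        (\<exists>g\<in>H. (\<lambda>n. hnorm ip (\<lambda>x. s n x - g x)) \<longlonglongrightarrow> 0)"
  using R unfolding rkhs_def by blast
lemma evalb: "\<exists>C. \<forall>f\<in>H. cmod (f x) \<le> C * hnorm ip f"
  using R unfolding rkhs_def by blast

lemma diff: "f \<in> H \<Longrightarrow> g \<in> H \<Longrightarrow> (\<lambda>x. f x - g x) \<in> H"
proof -
  assume a: "f \<in> H" "g \<in> H"
  have "(\<lambda>x. f x + (-1) * g x) \<in> H" using a add scale by blast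
  then show ?thesis by simp
qed

lemma ip_zero_left: "h \<in> H \<Longrightarrow> ip (\<lambda>x. 0) h = 0"
  using ip_scale[OF zero, of h 0] by simp

lemma ip_diff: "f \<in> H \<Longrightarrow> g \<in> H \<Longrightarrow> h \<in> H \<Longrightarrow> ip (\<lambda>x. f x - g x) h = ip f h - ip g h"
proof -
  assume a: "f \<in> H" "g \<in> H" "h \<in> H"
  have "ip (\<lambda>x. f x + (-1) * g x) h = ip f h + ip (\<lambda>x. (-1) * g x) h"
    using a by (intro ip_add scale)
  also have "\<dots> = ip f h - ip g h" using a ip_scale[of g h "-1"] by simp
  finally show ?thesis by simp
qed

lemma ip_add_r: "f \<in> H \<Longrightarrow> g \<in> H \<Longrightarrow> h \<in> H \<Longrightarrow> ip h (\<lambda>x. f x + g x) = ip h f + ip h g"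
  using ip_cnj[of "\<lambda>x. f x + g x" h] ip_cnj[of f h] ip_cnj[of g h] add ip_add by simp
lemma ip_diff_r: "f \<in> H \<Longrightarrow> g \<in> H \<Longrightarrow> h \<in> H \<Longrightarrow> ip h (\<lambda>x. f x - g x) = ip h f - ip h g"
  using ip_cnj[of "\<lambda>x. f x - g x" h] ip_cnj[of f h] ip_cnj[of g h] diff ip_diff by simp
lemma ip_scale_r: "f \<in> H \<Longrightarrow> g \<in> H \<Longrightarrow> ip g (\<lambda>x. c * f x) = cnj c * ip g f"
  using ip_cnj[of "\<lambda>x. c * f x" g] ip_cnj[of f g] scale ip_scale by simp
lemma ip_zero_right: "h \<in> H \<Longrightarrow> ip h (\<lambda>x. 0) = 0"
  using ip_cnj[of "\<lambda>x. 0" h] zero ip_zero_left by simp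

lemma hn_nonneg: assumes "f \<in> H" shows "hnorm ip f \<ge> 0" unfolding hnorm_def using ip_pos[OF assms] by simp
lemma hn_sq: assumes "f \<in> H" shows "(hnorm ip f)\<^sup>2 = Re (ip f f)"
  unfolding hnorm_def using ip_pos[OF assms] by simp
lemma ip_self: "f \<in> H \<Longrightarrow> ip f f = of_real ((hnorm ip f)\<^sup>2)"
  using hn_sq ip_pos by (simp add: complex_eq_iff)

lemma hn_add_sq: "f \<in> H \<Longrightarrow> g \<in> H \<Longrightarrow>
   (hnorm ip (\<lambda>x. f x + g x))\<^sup>2 = (hnorm ip f)\<^sup>2 + 2 * Re (ip f g) + (hnorm ip g)\<^sup>2"
  by (simp add: hn_sq add ip_add ip_add_r ip_cnj[of f g])

lemma hn_diff_sq: "f \<in> H \<Longrightarrow> g \<in> H \<Longrightarrow>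
   (hnorm ip (\<lambda>x. f x - g x))\<^sup>2 = (hnorm ip f)\<^sup>2 - 2 * Re (ip f g) + (hnorm ip g)\<^sup>2"
  by (simp add: hn_sq diff ip_diff ip_diff_r ip_cnj[of f g])

lemma hn_scale: "f \<in> H \<Longrightarrow> hnorm ip (\<lambda>x. c * f x) = cmod c * hnorm ip f"
proof -
  assume f: "f \<in> H"
  have "ip (\<lambda>x. c * f x) (\<lambda>x. c * f x) = (c * cnj c) * ip f f"
    using f by (simp add: ip_scale ip_scale_r scale)
  also have "c * cnj c = of_real ((cmod c)\<^sup>2)" by (simp add: complex_mult_cnj cmod_power2)
  finally have "Re (ip (\<lambda>x. c * f x) (\<lambda>x. c * f x)) = (cmod c)\<^sup>2 * Re (ip f f)"
    by simp
  then show ?thesis unfolding hnorm_def by (simp add: real_sqrt_mult)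
qed

lemma hn_zero_iff: "f \<in> H \<Longrightarrow> hnorm ip f = 0 \<longleftrightarrow> f = (\<lambda>x. 0)"
proof
  assume f: "f \<in> H" and "hnorm ip f = 0"
  then have "ip f f = 0" using ip_self by simp
  then show "f = (\<lambda>x. 0)" using f ip_def0 by blast
next
  assume "f = (\<lambda>x. 0)" then show "hnorm ip f = 0" unfolding hnorm_def using ip_zero_left zero by simp
qed


lemma cs_re: assumes f: "f \<in> H" and g: "g \<in> H" shows "Re (ip f g) \<le> hnorm ip f * hnorm ip g"
proof (cases "hnorm ip f = 0 \<or> hnorm ip g = 0")
  case True
  then show ?thesis
  proof
    assume "hnorm ip f = 0" then have "f = (\<lambda>x. 0)" using hn_zero_iff f by blast
    then show ?thesis using ip_zero_left[OF g] hn_nonneg[OF f] hn_nonneg[OF g] by simp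
  next
    assume "hnorm ip g = 0" then have "g = (\<lambda>x. 0)" using hn_zero_iff g by blast
    then show ?thesis using ip_zero_right[OF f] hn_nonneg[OF f] hn_nonneg[OF g] by simp
  qed
next
  case False
  define a where "a = hnorm ip g"
  define b where "b = hnorm ip f"
  have a0: "a > 0" using False hn_nonneg[OF g] a_def by simp
  have b0: "b > 0" using False hn_nonneg[OF f] b_def by simp
  have af: "(\<lambda>x. complex_of_real a * f x) \<in> H" "(\<lambda>x. complex_of_real b * g x) \<in> H" using f g scale by auto
  have "0 \<le> (hnorm ip (\<lambda>x. complex_of_real a * f x - complex_of_real b * g x))\<^sup>2" by simp
  also have "\<dots> = (hnorm ip (\<lambda>x. complex_of_real a * f x))\<^sup>2
      - 2 * Re (ip (\<lambda>x. complex_of_real a * f x) (\<lambda>x. complex_of_real b * g x))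
      + (hnorm ip (\<lambda>x. complex_of_real b * g x))\<^sup>2"
    using hn_diff_sq[OF af] by simp
  also have "\<dots> = a\<^sup>2 * b\<^sup>2 - 2 * (a * b * Re (ip f g)) + b\<^sup>2 * a\<^sup>2"
    using f g a0 b0 by (simp add: hn_scale ip_scale ip_scale_r scale a_def b_def power_mult_distrib)
  finally have "a * b * Re (ip f g) \<le> a * b * (a * b)" by (simp add: power2_eq_square algebra_simps)
  then have "Re (ip f g) \<le> a * b" using a0 b0 by (simp add: mult_le_cancel_left_pos)
  then show ?thesis by (simp add: a_def b_def mult.commute)
qed

lemma cs: assumes f: "f \<in> H" and g: "g \<in> H" shows "cmod (ip f g) \<le> hnorm ip f * hnorm ip g"
proof (cases "ip f g = 0")
  case True then show ?thesis using hn_nonneg f g by simp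
next
  case False
  define c where "c = ip f g"
  define u where "u = cnj c / complex_of_real (cmod c)"
  have c0: "cmod c > 0" using False c_def by simp
  have "ip (\<lambda>x. u * f x) g = u * c" using f g ip_scale c_def by simp
  also have "u * c = complex_of_real (cmod c)" unfolding u_def using c0
    by (simp add: complex_norm_square[symmetric] mult.commute power2_eq_square)
  finally have "cmod c \<le> hnorm ip (\<lambda>x. u * f x) * hnorm ip g" using cs_re[OF scale[OF f] g, of u] by simp
  also have "hnorm ip (\<lambda>x. u * f x) = cmod u * hnorm ip f" using f hn_scale by blast
  also have "cmod u = 1" using c0 unfolding u_def by (simp add: norm_divide)
  finally show ?thesis using c_def by simp
qed

lemma tri: assumes f: "f \<in> H" and g: "g \<in> H" shows "hnorm ip (\<lambda>x. f x + g x) \<le> hnorm ip f + hnorm ip g"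
proof -
  have "Re (ip f g) \<le> hnorm ip f * hnorm ip g" using cs_re f g by blast
  then have "(hnorm ip (\<lambda>x. f x + g x))\<^sup>2 \<le> (hnorm ip f + hnorm ip g)\<^sup>2"
    using hn_add_sq[OF f g] by (simp add: power2_eq_square algebra_simps)
  then show ?thesis using hn_nonneg f g by (meson add_nonneg_nonneg power2_le_imp_le)
qed

lemma tri_diff: assumes f: "f \<in> H" and g: "g \<in> H" and h: "h \<in> H"
  shows "hnorm ip (\<lambda>x. f x - h x) \<le> hnorm ip (\<lambda>x. f x - g x) + hnorm ip (\<lambda>x. g x - h x)"
  using tri[OF diff[OF f g] diff[OF g h]] by simp

lemma hn_commute: assumes f: "f \<in> H" and g: "g \<in> H"
  shows "hnorm ip (\<lambda>x. f x - g x) = hnorm ip (\<lambda>x. g x - f x)"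
  using hn_scale[OF diff[OF g f], of "-1"] by simp

lemma ip_unique: assumes "g1 \<in> H" "g2 \<in> H" "\<And>h. h \<in> H \<Longrightarrow> ip h g1 = ip h g2" shows "g1 = g2"
proof -
  have d: "(\<lambda>x. g1 x - g2 x) \<in> H" using assms diff by blast
  have "ip (\<lambda>x. g1 x - g2 x) (\<lambda>x. g1 x - g2 x) = 0"
    using assms d by (simp add: ip_diff_r)
  then have "(\<lambda>x. g1 x - g2 x) = (\<lambda>x. 0)" using ip_def0 d by blast
  then have "\<And>x. g1 x - g2 x = 0" by meson
  then show ?thesis by (simp add: fun_eq_iff)
qed


lemma riesz:
  fixes L :: "('x \<Rightarrow> complex) \<Rightarrow> complex"
  assumes Ladd: "\<And>f g. f \<in> H \<Longrightarrow> g \<in> H \<Longrightarrow> L (\<lambda>x. f x + g x) = L f + L g"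
    and Lscale: "\<And>c f. f \<in> H \<Longrightarrow> L (\<lambda>x. c * f x) = c * L f"
    and Lb: "\<And>f. f \<in> H \<Longrightarrow> cmod (L f) \<le> C * hnorm ip f"
  shows "\<exists>g\<in>H. \<forall>h\<in>H. L h = ip h g"
proof (cases "\<forall>h\<in>H. L h = 0")
  case True
  then show ?thesis using zero ip_zero_right by auto
next
  case False
  have Ldiff: "L (\<lambda>x. f x - g x) = L f - L g" if "f \<in> H" "g \<in> H" for f g
  proof -
    have e1: "L (\<lambda>x. f x + (-1) * g x) = L f + L (\<lambda>x. (-1) * g x)" using that Ladd scale by blast
    have e2: "L (\<lambda>x. (-1) * g x) = (-1) * L g" using that Lscale by blast
    have e: "(\<lambda>x. f x - g x) = (\<lambda>x. f x + (-1) * g x)" by simp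
    show ?thesis unfolding e e1 e2 by simp
  qed
  from False obtain x0 where x0: "x0 \<in> H" "L x0 \<noteq> 0" by blast
  define A where "A = {h\<in>H. L h = 1}"
  define D where "D = Inf ((\<lambda>h. (hnorm ip h)\<^sup>2) ` A)"
  have x1: "(\<lambda>x. (1 / L x0) * x0 x) \<in> A"
  proof -
    have a: "(\<lambda>x. (1 / L x0) * x0 x) \<in> H" using scale[OF x0(1)] by blast
    have b: "L (\<lambda>x. (1 / L x0) * x0 x) = (1 / L x0) * L x0" using Lscale[OF x0(1)] by blast
    show ?thesis unfolding A_def using a b x0(2) by simp
  qed
  have bdd: "bdd_below ((\<lambda>h. (hnorm ip h)\<^sup>2) ` A)" by (intro bdd_belowI[of _ 0]) auto
  have Dle: "D \<le> (hnorm ip h)\<^sup>2" if "h \<in> A" for h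
    unfolding D_def using that bdd by (intro cInf_lower) auto
  have D0: "D \<ge> 0" unfolding D_def using x1 by (intro cInf_greatest) auto
  have "\<exists>h. h \<in> A \<and> (hnorm ip h)\<^sup>2 < D + inverse (real (Suc n))" for n
  proof -
    have "Inf ((\<lambda>h. (hnorm ip h)\<^sup>2) ` A) < D + inverse (real (Suc n))" unfolding D_def by simp
    from cInf_lessD[OF _ this] x1 show ?thesis by blast
  qed
  then obtain s where s: "\<And>n. s n \<in> A" "\<And>n. (hnorm ip (s n))\<^sup>2 < D + inverse (real (Suc n))"
    by metis
  have sH: "s n \<in> H" for n using s(1) A_def by auto
  have para: "(hnorm ip (\<lambda>x. h x - k x))\<^sup>2 \<le> 2 * (hnorm ip h)\<^sup>2 + 2 * (hnorm ip k)\<^sup>2 - 4 * D"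
    if hk: "h \<in> A" "k \<in> A" for h k
  proof -
    have hH: "h \<in> H" "k \<in> H" using hk A_def by auto
    have m: "(\<lambda>x. (1/2) * (h x + k x)) \<in> A"
    proof -
      have "L (\<lambda>x. (1/2) * (h x + k x)) = (1/2) * L (\<lambda>x. h x + k x)" by (rule Lscale[OF add[OF hH]])
      also have "\<dots> = (1/2) * (L h + L k)" using Ladd[OF hH] by simp
      finally have "L (\<lambda>x. (1/2) * (h x + k x)) = 1" using hk unfolding A_def by simp
      moreover have "(\<lambda>x. (1/2) * (h x + k x)) \<in> H" by (rule scale[OF add[OF hH]])
      ultimately show ?thesis unfolding A_def by simp
    qed
    have "hnorm ip (\<lambda>x. (1/2) * (h x + k x)) = (1/2) * hnorm ip (\<lambda>x. h x + k x)"
      using hn_scale[OF add[OF hH], of "1/2"] by simp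
    then have "(hnorm ip (\<lambda>x. h x + k x))\<^sup>2 = 4 * (hnorm ip (\<lambda>x. (1/2) * (h x + k x)))\<^sup>2"
      by (rule half_sq)
    then have "4 * D \<le> (hnorm ip (\<lambda>x. h x + k x))\<^sup>2" using Dle[OF m] by linarith
    then show ?thesis using hn_add_sq[OF hH] hn_diff_sq[OF hH] by simp
  qed
  have cauchy: "\<exists>N. \<forall>m\<ge>N. \<forall>n\<ge>N. hnorm ip (\<lambda>x. s m x - s n x) < e" if e: "e > 0" for e
  proof -
    obtain N :: nat where N: "4 / e\<^sup>2 < real N" using reals_Archimedean2 by blast
    have "\<forall>m\<ge>N. \<forall>n\<ge>N. hnorm ip (\<lambda>x. s m x - s n x) < e"
    proof (intro allI impI)
      fix m n assume mn: "m \<ge> N" "n \<ge> N"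
      have "(hnorm ip (\<lambda>x. s m x - s n x))\<^sup>2 \<le> 2 * inverse (real (Suc m)) + 2 * inverse (real (Suc n))"
        using para[OF s(1) s(1), of m n] s(2)[of m] s(2)[of n] by linarith
      also have "\<dots> \<le> 2 * inverse (real (Suc N)) + 2 * inverse (real (Suc N))"
        using mn by (intro add_mono mult_left_mono le_imp_inverse_le) auto
      also have "\<dots> < e\<^sup>2"
      proof -
        have "4 < e\<^sup>2 * real (Suc N)" using N e
          by (simp add: field_simps) (smt (verit) zero_less_power)
        moreover have "2 * inverse (real (Suc N)) + 2 * inverse (real (Suc N)) = 4 / real (Suc N)"
          by (simp add: divide_inverse)
        ultimately show ?thesis by (simp add: pos_divide_less_eq)
      qed
      finally show "hnorm ip (\<lambda>x. s m x - s n x) < e"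
        using e by (meson less_le power_less_imp_less_base)
    qed
    then show ?thesis by blast
  qed
  obtain z where zH: "z \<in> H" and zlim: "(\<lambda>n. hnorm ip (\<lambda>x. s n x - z x)) \<longlonglongrightarrow> 0"
    using complete[of s, OF sH cauchy] by blast
  have Lz: "L z = 1"
  proof -
    have "cmod (L z - 1) \<le> C * hnorm ip (\<lambda>x. s n x - z x)" for n
    proof -
      have "L z - 1 = - L (\<lambda>x. s n x - z x)" using Ldiff[OF sH zH, of n] s(1)[of n] A_def by auto
      then show ?thesis using Lb[OF diff[OF sH zH]] by simp
    qed
    moreover have "(\<lambda>n. C * hnorm ip (\<lambda>x. s n x - z x)) \<longlonglongrightarrow> C * 0"
      by (intro tendsto_mult tendsto_const zlim)
    ultimately have "cmod (L z - 1) \<le> 0"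
      by (intro LIMSEQ_le_const[of "\<lambda>n. C * hnorm ip (\<lambda>x. s n x - z x)"]) auto
    then show ?thesis by simp
  qed
  have zA: "z \<in> A" using zH Lz A_def by auto
  have zmin: "(hnorm ip z)\<^sup>2 \<le> D"
  proof -
    have "hnorm ip z \<le> sqrt (D + inverse (real (Suc n))) + hnorm ip (\<lambda>x. s n x - z x)" for n
    proof -
      have "hnorm ip z = hnorm ip (\<lambda>x. s n x + (z x - s n x))" by simp
      also have "\<dots> \<le> hnorm ip (s n) + hnorm ip (\<lambda>x. z x - s n x)" by (intro tri sH diff zH)
      also have "hnorm ip (\<lambda>x. z x - s n x) = hnorm ip (\<lambda>x. s n x - z x)" using hn_commute sH zH by blast
      also have "hnorm ip (s n) < sqrt (D + inverse (real (Suc n)))" using s(2) real_less_rsqrt by blast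
      finally show ?thesis by simp
    qed
    moreover have "(\<lambda>n. sqrt (D + inverse (real (Suc n))) + hnorm ip (\<lambda>x. s n x - z x)) \<longlonglongrightarrow> sqrt (D + 0) + 0"
      by (intro tendsto_add tendsto_real_sqrt tendsto_const LIMSEQ_inverse_real_of_nat zlim)
    ultimately have "hnorm ip z \<le> sqrt D"
      by (intro LIMSEQ_le_const[of "\<lambda>n. sqrt (D + inverse (real (Suc n))) + hnorm ip (\<lambda>x. s n x - z x)"]) auto
    then show ?thesis using hn_nonneg[OF zH] D0 by (metis real_sqrt_le_iff real_sqrt_unique zero_le_power2 power2_le_imp_le sqrt_le_D)
  qed
  have orth: "ip z k = 0" if kH: "k \<in> H" and Lk: "L k = 0" for k
  proof -
    define a where "a = ip z k"
    define K where "K = (hnorm ip k)\<^sup>2"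
    define r :: real where "r = - 1 / (K + 1)"
    define t where "t = complex_of_real r * a"
    have K0: "K \<ge> 0" unfolding K_def by simp
    have tk: "(\<lambda>x. t * k x) \<in> H" using kH scale by blast
    have "(\<lambda>x. z x + t * k x) \<in> A" using zH tk add Ladd Lscale Lz Lk kH unfolding A_def by auto
    then have "(hnorm ip z)\<^sup>2 \<le> (hnorm ip (\<lambda>x. z x + t * k x))\<^sup>2" using zmin Dle by force
    also have "\<dots> = (hnorm ip z)\<^sup>2 + 2 * Re (ip z (\<lambda>x. t * k x)) + (hnorm ip (\<lambda>x. t * k x))\<^sup>2"
      using hn_add_sq[OF zH tk] .
    also have "ip z (\<lambda>x. t * k x) = cnj t * a" using ip_scale_r[OF kH zH] a_def by simp
    also have "Re (cnj t * a) = r * (cmod a)\<^sup>2"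
      unfolding t_def cmod_power2 by (simp add: power2_eq_square algebra_simps)
    also have "(hnorm ip (\<lambda>x. t * k x))\<^sup>2 = r\<^sup>2 * (cmod a)\<^sup>2 * K"
      unfolding K_def t_def using hn_scale[OF kH] by (simp add: norm_mult power_mult_distrib)
    finally have ineq: "0 \<le> 2 * (r * (cmod a)\<^sup>2) + r\<^sup>2 * (cmod a)\<^sup>2 * K" by simp
    have "2 * (r * (cmod a)\<^sup>2) + r\<^sup>2 * (cmod a)\<^sup>2 * K = - (cmod a)\<^sup>2 * (K + 2) / (K + 1)\<^sup>2"
      unfolding r_def using K0 by (rule aux_q)
    with ineq have "(cmod a)\<^sup>2 * (K + 2) / (K + 1)\<^sup>2 \<le> 0" by simp
    moreover have "(K + 1)\<^sup>2 > 0" "K + 2 > 0" using K0 by auto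
    ultimately have "(cmod a)\<^sup>2 * (K + 2) \<le> 0" by (simp add: divide_le_0_iff)
    then have "(cmod a)\<^sup>2 \<le> 0" using \<open>K + 2 > 0\<close> by (simp add: mult_le_0_iff)
    then show ?thesis unfolding a_def by simp
  qed
  have nz: "(hnorm ip z)\<^sup>2 > 0"
  proof -
    have "z \<noteq> (\<lambda>x. 0)"
    proof
      assume "z = (\<lambda>x. 0)"
      then have "L z = L (\<lambda>x. 0 * z x)" by simp
      also have "\<dots> = 0" using Lscale[OF zH, of 0] by simp
      finally show False using Lz by simp
    qed
    then have "hnorm ip z \<noteq> 0" using hn_zero_iff zH by blast
    then show ?thesis by simp
  qed
  define g where "g = (\<lambda>x. complex_of_real (1 / (hnorm ip z)\<^sup>2) * z x)"
  have gH: "g \<in> H" unfolding g_def using zH scale by blast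
  have "L h = ip h g" if hH: "h \<in> H" for h
  proof -
    define k where "k = (\<lambda>x. h x - L h * z x)"
    have kH: "k \<in> H" unfolding k_def using hH zH diff scale by blast
    have "L k = 0" unfolding k_def using Ldiff[OF hH scale[OF zH]] Lscale zH Lz by simp
    then have "ip z k = 0" using orth kH by blast
    then have "ip k z = 0" using ip_cnj[OF zH kH] by simp
    then have "ip h z = L h * ip z z" unfolding k_def using hH zH scale
      by (simp add: ip_diff ip_scale)
    then have "ip h z = L h * complex_of_real ((hnorm ip z)\<^sup>2)" using ip_self zH by simp
    have "ip h g = cnj (complex_of_real (1 / (hnorm ip z)\<^sup>2)) * ip h z"
      unfolding g_def by (rule ip_scale_r[OF zH hH])
    also have "\<dots> = complex_of_real (1 / (hnorm ip z)\<^sup>2) * (L h * complex_of_real ((hnorm ip z)\<^sup>2))"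
      using \<open>ip h z = L h * complex_of_real ((hnorm ip z)\<^sup>2)\<close> by simp
    also have "\<dots> = L h" using nz by (simp add: of_real_divide)
    finally show ?thesis by simp
  qed
  then show ?thesis using gH by blast
qed


lemma mb_mem: "mult_ball H ip \<psi> \<Longrightarrow> h \<in> H \<Longrightarrow> (\<lambda>x. \<psi> x * h x) \<in> H"
  unfolding mult_ball_def multiplier_def by blast
lemma mb_le: "mult_ball H ip \<psi> \<Longrightarrow> h \<in> H \<Longrightarrow> hnorm ip (\<lambda>x. \<psi> x * h x) \<le> hnorm ip h"
  unfolding mult_ball_def by blast

lemma adj_ex: assumes psi: "mult_ball H ip \<psi>" and f: "f \<in> H"
  shows "\<exists>g\<in>H. \<forall>h\<in>H. ip (Mop \<psi> h) f = ip h g"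
proof -
  have "\<exists>g\<in>H. \<forall>h\<in>H. (\<lambda>h. ip (\<lambda>x. \<psi> x * h x) f) h = ip h g"
  proof (rule riesz)
    fix h k assume hk: "h \<in> H" "k \<in> H"
    have e: "(\<lambda>x. \<psi> x * (h x + k x)) = (\<lambda>x. \<psi> x * h x + \<psi> x * k x)" by (simp add: algebra_simps)
    show "ip (\<lambda>x. \<psi> x * (h x + k x)) f = ip (\<lambda>x. \<psi> x * h x) f + ip (\<lambda>x. \<psi> x * k x) f"
      unfolding e using hk f psi by (intro ip_add mb_mem)
  next
    fix c h assume h: "h \<in> H"
    have e: "(\<lambda>x. \<psi> x * (c * h x)) = (\<lambda>x. c * (\<psi> x * h x))" by (simp add: algebra_simps)
    show "ip (\<lambda>x. \<psi> x * (c * h x)) f = c * ip (\<lambda>x. \<psi> x * h x) f"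
      unfolding e using h f psi by (intro ip_scale mb_mem)
  next
    fix h assume h: "h \<in> H"
    have "cmod (ip (\<lambda>x. \<psi> x * h x) f) \<le> hnorm ip (\<lambda>x. \<psi> x * h x) * hnorm ip f"
      using h f psi by (intro cs mb_mem)
    also have "\<dots> \<le> hnorm ip h * hnorm ip f"
      by (rule mult_right_mono[OF mb_le[OF psi h] hn_nonneg[OF f]])
    finally show "cmod (ip (\<lambda>x. \<psi> x * h x) f) \<le> hnorm ip f * hnorm ip h" by (simp add: mult.commute)
  qed
  then show ?thesis unfolding Mop_def by simp
qed

lemma adj: assumes psi: "mult_ball H ip \<psi>" and f: "f \<in> H"
  shows "hadj H ip (Mop \<psi>) f \<in> H \<and> (\<forall>h\<in>H. ip (Mop \<psi> h) f = ip h (hadj H ip (Mop \<psi>) f))"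
proof -
  have "\<exists>!g. g \<in> H \<and> (\<forall>h\<in>H. ip (Mop \<psi> h) f = ip h g)"
  proof (rule ex_ex1I)
    show "\<exists>g. g \<in> H \<and> (\<forall>h\<in>H. ip (Mop \<psi> h) f = ip h g)" using adj_ex[OF psi f] by blast
  next
    fix g1 g2 assume "g1 \<in> H \<and> (\<forall>h\<in>H. ip (Mop \<psi> h) f = ip h g1)" "g2 \<in> H \<and> (\<forall>h\<in>H. ip (Mop \<psi> h) f = ip h g2)"
    then show "g1 = g2" using ip_unique[of g1 g2] by auto
  qed
  then show ?thesis unfolding hadj_def by (rule theI')
qed

lemma adj_eq: assumes psi: "mult_ball H ip \<psi>" and f: "f \<in> H" and g: "g \<in> H"
  and eq: "\<And>h. h \<in> H \<Longrightarrow> ip (Mop \<psi> h) f = ip h g"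
  shows "hadj H ip (Mop \<psi>) f = g"
  using ip_unique[of "hadj H ip (Mop \<psi>) f" g] adj[OF psi f] eq g by auto

lemma mb_mult: assumes "mult_ball H ip \<alpha>" "mult_ball H ip \<beta>" shows "mult_ball H ip (\<lambda>x. \<alpha> x * \<beta> x)"
proof -
  have e: "(\<lambda>x. \<alpha> x * \<beta> x * h x) = (\<lambda>x. \<alpha> x * (\<beta> x * h x))" for h by (simp add: mult.assoc)
  show ?thesis unfolding mult_ball_def multiplier_def e
  proof (intro conjI ballI)
    fix h assume h: "h \<in> H"
    show "(\<lambda>x. \<alpha> x * (\<beta> x * h x)) \<in> H" by (rule mb_mem[OF assms(1) mb_mem[OF assms(2) h]])
    show "hnorm ip (\<lambda>x. \<alpha> x * (\<beta> x * h x)) \<le> hnorm ip h"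
      by (rule order_trans[OF mb_le[OF assms(1) mb_mem[OF assms(2) h]] mb_le[OF assms(2) h]])
  qed
qed

lemma mb_one: "mult_ball H ip (\<lambda>x. 1)"
  unfolding mult_ball_def multiplier_def by simp

lemma adj_one: "f \<in> H \<Longrightarrow> hadj H ip (Mop (\<lambda>x. 1)) f = f"
  by (rule adj_eq[OF mb_one]) (auto simp: Mop_def)

lemma adj_comp: assumes a: "mult_ball H ip \<alpha>" and b: "mult_ball H ip \<beta>" and f: "f \<in> H"
  shows "hadj H ip (Mop \<beta>) (hadj H ip (Mop \<alpha>) f) = hadj H ip (Mop (\<lambda>x. \<alpha> x * \<beta> x)) f"
proof (rule sym, rule adj_eq[OF mb_mult[OF a b] f])
  have A1: "hadj H ip (Mop \<alpha>) f \<in> H" using adj[OF a f] by blast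
  show "hadj H ip (Mop \<beta>) (hadj H ip (Mop \<alpha>) f) \<in> H" using adj[OF b A1] by blast
  fix h assume h: "h \<in> H"
  have "ip (Mop (\<lambda>x. \<alpha> x * \<beta> x) h) f = ip (Mop \<alpha> (Mop \<beta> h)) f"
    unfolding Mop_def by (simp add: mult.assoc)
  also have "\<dots> = ip (Mop \<beta> h) (hadj H ip (Mop \<alpha>) f)"
  proof -
    have "Mop \<beta> h \<in> H" using mb_mem[OF b h] unfolding Mop_def .
    then show ?thesis using adj[OF a f] by blast
  qed
  also have "\<dots> = ip h (hadj H ip (Mop \<beta>) (hadj H ip (Mop \<alpha>) f))"
    using adj[OF b A1] h by blast
  finally show "ip (Mop (\<lambda>x. \<alpha> x * \<beta> x) h) f = ip h (hadj H ip (Mop \<beta>) (hadj H ip (Mop \<alpha>) f))" .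
qed

lemma adj_norm: assumes psi: "mult_ball H ip \<psi>" and f: "f \<in> H"
  shows "hnorm ip (hadj H ip (Mop \<psi>) f) \<le> hnorm ip f"
proof -
  define g where "g = hadj H ip (Mop \<psi>) f"
  have g: "g \<in> H" "\<And>h. h \<in> H \<Longrightarrow> ip (Mop \<psi> h) f = ip h g" using adj[OF psi f] g_def by auto
  have pg: "(\<lambda>x. \<psi> x * g x) \<in> H" using mb_mem[OF psi g(1)] .
  have "(hnorm ip g)\<^sup>2 = Re (ip g g)" using hn_sq g by blast
  also have "ip g g = ip (\<lambda>x. \<psi> x * g x) f" using g(2)[OF g(1)] unfolding Mop_def by simp
  also have "Re \<dots> \<le> cmod \<dots>" by (rule complex_Re_le_cmod)
  also have "\<dots> \<le> hnorm ip (\<lambda>x. \<psi> x * g x) * hnorm ip f" using cs[OF pg f] .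
  also have "\<dots> \<le> hnorm ip g * hnorm ip f" using mb_le[OF psi g(1)] hn_nonneg[OF f] by (rule mult_right_mono)
  finally have "hnorm ip g * hnorm ip g \<le> hnorm ip g * hnorm ip f" by (simp add: power2_eq_square)
  then have "hnorm ip g \<le> hnorm ip f"
  proof (cases "hnorm ip g = 0")
    case True then show ?thesis using hn_nonneg[OF f] by simp
  next
    case False
    then have "hnorm ip g > 0" using hn_nonneg[OF g(1)] by simp
    then show ?thesis using \<open>hnorm ip g * hnorm ip g \<le> hnorm ip g * hnorm ip f\<close>
      by (simp add: mult_le_cancel_left_pos)
  qed
  then show ?thesis using g_def by simp
qed

lemma step_est: assumes psi: "mult_ball H ip \<psi>" and u: "u \<in> H"
  shows "(hnorm ip (\<lambda>x. u x - \<psi> x * hadj H ip (Mop \<psi>) u x))\<^sup>2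
         \<le> (hnorm ip u)\<^sup>2 - (hnorm ip (hadj H ip (Mop \<psi>) u))\<^sup>2"
proof -
  define w where "w = hadj H ip (Mop \<psi>) u"
  have w: "w \<in> H" "\<And>h. h \<in> H \<Longrightarrow> ip (Mop \<psi> h) u = ip h w" using adj[OF psi u] w_def by auto
  have pw: "(\<lambda>x. \<psi> x * w x) \<in> H" using mb_mem[OF psi w(1)] .
  have "ip u (\<lambda>x. \<psi> x * w x) = cnj (ip (\<lambda>x. \<psi> x * w x) u)" using ip_cnj[OF pw u] .
  also have "ip (\<lambda>x. \<psi> x * w x) u = ip w w" using w(2)[OF w(1)] unfolding Mop_def by simp
  finally have "Re (ip u (\<lambda>x. \<psi> x * w x)) = (hnorm ip w)\<^sup>2" using hn_sq[OF w(1)] by simp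
  moreover have "(hnorm ip (\<lambda>x. \<psi> x * w x))\<^sup>2 \<le> (hnorm ip w)\<^sup>2"
    using mb_le[OF psi w(1)] hn_nonneg[OF pw] by (rule power_mono)
  ultimately show ?thesis using hn_diff_sq[OF u pw] w_def by simp
qed


lemma mb_prod: assumes "finite S" "\<And>k. k \<in> S \<Longrightarrow> mult_ball H ip (\<phi> k)"
  shows "mult_ball H ip (\<lambda>x. \<Prod>k\<in>S. \<phi> k x)"
  using assms
proof (induction S rule: finite_induct)
  case empty then show ?case using mb_one by simp
next
  case (insert a S)
  have "mult_ball H ip (\<lambda>x. \<phi> a x * (\<Prod>k\<in>S. \<phi> k x))"
    using insert by (intro mb_mult) auto
  then show ?case using insert by simp
qed

end

theorem theorem2p1:
  fixes H :: "('x \<Rightarrow> complex) set"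
    and ip :: "('x \<Rightarrow> complex) \<Rightarrow> ('x \<Rightarrow> complex) \<Rightarrow> complex"
    and \<phi> :: "nat \<Rightarrow> 'x \<Rightarrow> complex"
    and f :: "'x \<Rightarrow> complex"
  assumes "rkhs H ip"
    and "\<And>n. n \<ge> 1 \<Longrightarrow> mult_ball H ip (\<phi> n)"
    and "\<And>x. (\<lambda>n. Phi \<phi> n x) \<longlonglongrightarrow> 0"
    and "f \<in> H"
  shows "(\<lambda>N. hnorm ip (\<lambda>x. f x - (\<Sum>n\<in>{1..N}.
            Phi \<phi> (n - 1) x * Qop H ip (\<phi> n) (hadj H ip (Mop (Phi \<phi> (n - 1))) f) x)))
         \<longlonglongrightarrow> 0"
proof -
  interpret rk H ip using assms(1) by (rule rk.intro)
  have fH: "f \<in> H" by (rule assms(4))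
  define P where "P n = Phi \<phi> n" for n
  define g where "g n = hadj H ip (Mop (P n)) f" for n
  define p where "p n = (\<lambda>x. P n x * g n x)" for n
  have mbP: "mult_ball H ip (P n)" for n
    unfolding P_def Phi_def by (rule mb_prod) (use assms(2) in auto)
  have P0: "P 0 = (\<lambda>x. 1)" unfolding P_def Phi_def by simp
  have PSuc: "P (Suc n) = (\<lambda>x. P n x * \<phi> (Suc n) x)" for n
    unfolding P_def Phi_def by (simp add: prod.cl_ivl_Suc)
  have gH: "g n \<in> H" for n using adj[OF mbP fH] g_def by auto
  have g0: "g 0 = f" using adj_one[OF fH] P0 g_def by simp
  have gSuc: "hadj H ip (Mop (\<phi> (Suc n))) (g n) = g (Suc n)" for n
    unfolding g_def PSuc using adj_comp[OF mbP assms(2)[of "Suc n"] fH] by simp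
  have p0: "p 0 = f" unfolding p_def g0 P0 by simp
  have pH: "p n \<in> H" for n unfolding p_def by (rule mb_mem[OF mbP gH])
  have tm: "P (n-1) x * Qop H ip (\<phi> n) (g (n-1)) x = p (n-1) x - p n x" if n1: "n \<ge> 1" for n x
  proof -
    obtain m where n: "n = Suc m" using n1 by (cases n) auto
    have "P m x * Qop H ip (\<phi> (Suc m)) (g m) x = P m x * (g m x - \<phi> (Suc m) x * g (Suc m) x)"
      unfolding Qop_def using gSuc[of m] by (simp add: Mop_def)
    also have "\<dots> = p m x - p (Suc m) x" unfolding p_def PSuc by (simp add: algebra_simps)
    finally show ?thesis unfolding n by simp
  qed
  have tele: "(\<Sum>n\<in>{1..N}. p (n-1) x - p n x) = p 0 x - p N x" for N x
    by (induction N) (auto simp: sum.cl_ivl_Suc)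
  have red: "(\<lambda>x. f x - (\<Sum>n\<in>{1..N}. Phi \<phi> (n - 1) x * Qop H ip (\<phi> n) (hadj H ip (Mop (Phi \<phi> (n - 1))) f) x)) = p N" for N
  proof
    fix x
    have "(\<Sum>n\<in>{1..N}. Phi \<phi> (n - 1) x * Qop H ip (\<phi> n) (hadj H ip (Mop (Phi \<phi> (n - 1))) f) x)
        = (\<Sum>n\<in>{1..N}. p (n-1) x - p n x)"
    proof (rule sum.cong)
      fix n assume "n \<in> {1..N}"
      then have "n \<ge> 1" by simp
      from tm[OF this, of x] show "Phi \<phi> (n - 1) x * Qop H ip (\<phi> n) (hadj H ip (Mop (Phi \<phi> (n - 1))) f) x = p (n-1) x - p n x"
        unfolding g_def P_def .
    qed simp
    then show "f x - (\<Sum>n\<in>{1..N}. Phi \<phi> (n - 1) x * Qop H ip (\<phi> n) (hadj H ip (Mop (Phi \<phi> (n - 1))) f) x) = p N x"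
      using tele[where N=N and x=x] p0 by simp
  qed
  define a where "a n = (hnorm ip (g n))\<^sup>2" for n
  have a0: "a n \<ge> 0" for n unfolding a_def by simp
  have "decseq a"
  proof (rule decseq_SucI)
    fix n
    have "hnorm ip (g (Suc n)) \<le> hnorm ip (g n)"
      using adj_norm[OF assms(2)[of "Suc n"] gH[of n]] gSuc[of n] by simp
    then show "a (Suc n) \<le> a n" unfolding a_def using hn_nonneg[OF gH] by (simp add: power_mono)
  qed
  then obtain La where "a \<longlonglongrightarrow> La" using decseq_convergent[of a 0] a0 by metis
  then have Ca: "Cauchy a" by (intro convergent_Cauchy convergentI)
  have est: "(hnorm ip (\<lambda>x. p n x - p m x))\<^sup>2 \<le> a n - a m" if nm: "n \<le> m" for n m
  proof -
    define Q where "Q = (\<lambda>x. \<Prod>k\<in>{Suc n..m}. \<phi> k x)"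
    have mbQ: "mult_ball H ip Q" unfolding Q_def by (rule mb_prod) (use assms(2) in auto)
    have split: "P m = (\<lambda>x. P n x * Q x)"
    proof
      fix x
      have "m = n + (m - n)" using nm by simp
      then have "(\<Prod>k\<in>{1..m}. \<phi> k x) = (\<Prod>k\<in>{1..n + (m - n)}. \<phi> k x)" by simp
      also have "\<dots> = (\<Prod>k\<in>{1..n}. \<phi> k x) * (\<Prod>k\<in>{n + 1..n + (m - n)}. \<phi> k x)"
        by (rule prod.ub_add_nat) simp
      also have "{n + 1..n + (m - n)} = {Suc n..m}" using nm by auto
      finally show "P m x = P n x * Q x" unfolding P_def Phi_def Q_def by simp
    qed
    have gm: "hadj H ip (Mop Q) (g n) = g m"
      unfolding g_def split using adj_comp[OF mbP mbQ fH] by simp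
    have qg: "(\<lambda>x. Q x * g m x) \<in> H" by (rule mb_mem[OF mbQ gH])
    have dH: "(\<lambda>x. g n x - Q x * g m x) \<in> H" by (rule diff[OF gH qg])
    have "(\<lambda>x. p n x - p m x) = (\<lambda>x. P n x * (g n x - Q x * g m x))"
      unfolding p_def split by (simp add: algebra_simps)
    then have "hnorm ip (\<lambda>x. p n x - p m x) \<le> hnorm ip (\<lambda>x. g n x - Q x * g m x)"
      using mb_le[OF mbP dH] by simp
    then have "(hnorm ip (\<lambda>x. p n x - p m x))\<^sup>2 \<le> (hnorm ip (\<lambda>x. g n x - Q x * g m x))\<^sup>2"
      using hn_nonneg[OF diff[OF pH pH]] by (simp add: power_mono)
    also have "\<dots> \<le> a n - a m" using step_est[OF mbQ gH[of n]] unfolding gm a_def .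
    finally show ?thesis .
  qed
  have cauchy: "\<exists>N. \<forall>m\<ge>N. \<forall>n\<ge>N. hnorm ip (\<lambda>x. p m x - p n x) < e" if e: "e > 0" for e
  proof -
    obtain M where M: "\<forall>m\<ge>M. \<forall>n\<ge>M. dist (a m) (a n) < e\<^sup>2"
      using metric_CauchyD[OF Ca, of "e\<^sup>2"] e by auto
    have le: "hnorm ip (\<lambda>x. p n x - p m x) < e" if "n \<le> m" "M \<le> n" for n m
    proof -
      have "(hnorm ip (\<lambda>x. p n x - p m x))\<^sup>2 \<le> a n - a m" using est that by blast
      also have "\<dots> < e\<^sup>2"
      proof -
        have "\<bar>a n - a m\<bar> < e\<^sup>2" using M that by (auto simp: dist_real_def)
        then show ?thesis by linarith
      qed
      finally show ?thesis using e by (meson less_le power_less_imp_less_base)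
    qed
    have "\<forall>m\<ge>M. \<forall>n\<ge>M. hnorm ip (\<lambda>x. p m x - p n x) < e"
    proof (intro allI impI)
      fix m n assume "m \<ge> M" "n \<ge> M"
      show "hnorm ip (\<lambda>x. p m x - p n x) < e"
      proof (cases "m \<le> n")
        case True then show ?thesis using le \<open>m \<ge> M\<close> by blast
      next
        case False
        then have "hnorm ip (\<lambda>x. p n x - p m x) < e" using le \<open>n \<ge> M\<close> by simp
        then show ?thesis using hn_commute[OF pH pH] by metis
      qed
    qed
    then show ?thesis by blast
  qed
  obtain z where zH: "z \<in> H" and zlim: "(\<lambda>n. hnorm ip (\<lambda>x. p n x - z x)) \<longlonglongrightarrow> 0"
    using complete[of p, OF pH cauchy] by blast
  have z0: "z = (\<lambda>x. 0)"
  proof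
    fix x
    obtain C where C: "\<forall>h\<in>H. cmod (h x) \<le> C * hnorm ip h" using evalb by blast
    have pt: "(\<lambda>n. p n x) \<longlonglongrightarrow> 0"
    proof (rule tendsto_0_le[OF assms(3)[of x], where K = "\<bar>C\<bar> * hnorm ip f"])
      show "\<forall>\<^sub>F n in sequentially. norm (p n x) \<le> norm (Phi \<phi> n x) * (\<bar>C\<bar> * hnorm ip f)"
      proof (rule always_eventually, rule allI)
        fix n
        have "cmod (g n x) \<le> C * hnorm ip (g n)" using C gH by blast
        also have "\<dots> \<le> \<bar>C\<bar> * hnorm ip (g n)" using hn_nonneg[OF gH] by (simp add: mult_right_mono)
        also have "\<dots> \<le> \<bar>C\<bar> * hnorm ip f" using adj_norm[OF mbP fH] g_def by (simp add: mult_left_mono)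
        finally have "cmod (g n x) \<le> \<bar>C\<bar> * hnorm ip f" .
        then show "norm (p n x) \<le> norm (Phi \<phi> n x) * (\<bar>C\<bar> * hnorm ip f)"
          unfolding p_def P_def by (simp add: norm_mult mult_left_mono)
      qed
    qed
    have dt: "(\<lambda>n. p n x - z x) \<longlonglongrightarrow> 0"
    proof (rule tendsto_0_le[OF zlim, where K = C])
      show "\<forall>\<^sub>F n in sequentially. norm (p n x - z x) \<le> norm (hnorm ip (\<lambda>x. p n x - z x)) * C"
      proof (rule always_eventually, rule allI)
        fix n
        have "cmod ((\<lambda>x. p n x - z x) x) \<le> C * hnorm ip (\<lambda>x. p n x - z x)" using bspec[OF C diff[OF pH[of n] zH]] by simp
        then show "norm (p n x - z x) \<le> norm (hnorm ip (\<lambda>x. p n x - z x)) * C"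
          using hn_nonneg[OF diff[OF pH zH]] by (simp add: mult.commute)
      qed
    qed
    have "(\<lambda>n. (p n x - z x) + z x) \<longlonglongrightarrow> 0 + z x" by (intro tendsto_add dt tendsto_const)
    then have "(\<lambda>n. p n x) \<longlonglongrightarrow> z x" by simp
    then show "z x = 0" using pt LIMSEQ_unique by blast
  qed
  have "(\<lambda>N. hnorm ip (p N)) \<longlonglongrightarrow> 0" using zlim unfolding z0 by simp
  then show ?thesis unfolding red .
qed

end
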